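(* If $G$ is a $TR^{*}$-group, then the set $\mathrm{Tor}(G)$ of all torsion elements of $G$ is a normal subgroup of $G$.
   Context: For $g,x$ in a group, $g^{x}:=xgx^{-1}$. A non-trivial element $g$ of a group $G$ is a generalized torsion element if there exist a positive integer $n$ and $x_1,\ldots,x_n\in G$ with $g^{x_1}g^{x_2}\cdots g^{x_n}=1$. A group is a $TR^{*}$-group if every generalized torsion element of it is a torsion element. *)

theory Defs
  imports "HOL-Algebra.Algebra"
begin

definition conj_elem :: "('a, 'b) monoid_scheme \<Rightarrow> 'a \<Rightarrow> 'a \<Rightarrow> 'a" where
  "conj_elem G g x = x \<otimes>\<^bsub>G\<^esub> g \<otimes>\<^bsub>G\<^esub> inv\<^bsub>G\<^esub> x"

definition list_prod :: "('a, 'b) monoid_scheme \<Rightarrow> 'a list \<Rightarrow> 'a" where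
  "list_prod G xs = foldr (\<lambda>a b. a \<otimes>\<^bsub>G\<^esub> b) xs \<one>\<^bsub>G\<^esub>"

definition torsion_elem :: "('a, 'b) monoid_scheme \<Rightarrow> 'a \<Rightarrow> bool" where
  "torsion_elem G g \<longleftrightarrow> g \<in> carrier G \<and> (\<exists>n::nat. n > 0 \<and> g [^]\<^bsub>G\<^esub> n = \<one>\<^bsub>G\<^esub>)"

definition Tor :: "('a, 'b) monoid_scheme \<Rightarrow> 'a set" where
  "Tor G = {g. torsion_elem G g}"

definition gen_torsion_elem :: "('a, 'b) monoid_scheme \<Rightarrow> 'a \<Rightarrow> bool" where
  "gen_torsion_elem G g \<longleftrightarrow> g \<in> carrier G \<and> g \<noteq> \<one>\<^bsub>G\<^esub> \<and>
     (\<exists>xs. length xs > 0 \<and> set xs \<subseteq> carrier G \<and>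
        list_prod G (map (conj_elem G g) xs) = \<one>\<^bsub>G\<^esub>)"

definition TR_star_group :: "('a, 'b) monoid_scheme \<Rightarrow> bool" where
  "TR_star_group G \<longleftrightarrow> group G \<and> (\<forall>g. gen_torsion_elem G g \<longrightarrow> torsion_elem G g)"

end

theory Submission
  imports Defs
begin

lemma (in group) list_prod_closed:
  "set xs \<subseteq> carrier G \<Longrightarrow> list_prod G xs \<in> carrier G"
  by (induction xs) (auto simp: list_prod_def)

lemma (in group) list_prod_append:
  "set xs \<subseteq> carrier G \<Longrightarrow> set ys \<subseteq> carrier G \<Longrightarrow>
   list_prod G (xs @ ys) = list_prod G xs \<otimes> list_prod G ys"
proof (induction xs)
  case Nil then show ?case using list_prod_closed[of ys] by (simp add: list_prod_def)
next
  case (Cons a xs)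
  then show ?case using list_prod_closed[of ys] list_prod_closed[of xs]
    by (simp add: list_prod_def m_assoc)
qed

lemma (in group) list_prod_rep:
  "set xs \<subseteq> carrier G \<Longrightarrow>
   list_prod G (concat (replicate n xs)) = list_prod G xs [^] n"
proof (induction n)
  case 0 then show ?case by (simp add: list_prod_def)
next
  case (Suc n)
  have "list_prod G (concat (replicate (Suc n) xs)) = list_prod G xs \<otimes> list_prod G (concat (replicate n xs))"
  proof -
    have "set (concat (replicate n xs)) \<subseteq> carrier G" using Suc.prems by (induction n) auto
    then show ?thesis using Suc.prems list_prod_append[of xs "concat (replicate n xs)"] by simp
  qed
  also have "\<dots> = list_prod G xs [^] Suc n"
    using Suc list_prod_closed[of xs] by (metis nat_pow_Suc2)
  finally show ?case .
qed

lemma (in group) lc1: "x \<in> carrier G \<Longrightarrow> y \<in> carrier G \<Longrightarrow> x \<otimes> (inv x \<otimes> y) = y"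
  by (simp add: m_assoc[symmetric])

lemma (in group) lc2: "x \<in> carrier G \<Longrightarrow> y \<in> carrier G \<Longrightarrow> inv x \<otimes> (x \<otimes> y) = y"
  by (simp add: m_assoc[symmetric])

lemma (in group) conj_closed:
  "g \<in> carrier G \<Longrightarrow> x \<in> carrier G \<Longrightarrow> conj_elem G g x \<in> carrier G"
  by (simp add: conj_elem_def)

lemma (in group) blk:
  assumes a: "a \<in> carrier G" and b: "b \<in> carrier G"
  shows "list_prod G (map (conj_elem G (a \<otimes> b)) (map (\<lambda>j. b [^] Suc j) (rev [0..<k])))
         = b [^] k \<otimes> a [^] k"
proof (induction k)
  case 0 then show ?case by (simp add: list_prod_def)
next
  case (Suc k)
  let ?B = "b [^] k"
  have B: "?B \<in> carrier G" using b by simp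
  have "list_prod G (map (conj_elem G (a \<otimes> b)) (map (\<lambda>j. b [^] Suc j) (rev [0..<Suc k])))
     = conj_elem G (a \<otimes> b) (b [^] Suc k) \<otimes> (?B \<otimes> a [^] k)"
    using Suc by (simp add: list_prod_def)
  also have "\<dots> = (b [^] Suc k \<otimes> a) \<otimes> (b \<otimes> inv b) \<otimes> (inv ?B \<otimes> ?B) \<otimes> a [^] k"
    using a b B by (simp add: conj_elem_def inv_mult_group m_assoc lc1 lc2)
  also have "\<dots> = b [^] Suc k \<otimes> (a \<otimes> a [^] k)"
    using a b B by (simp add: m_assoc[symmetric] lc1 lc2)
  also have "\<dots> = b [^] Suc k \<otimes> a [^] Suc k"
    using nat_pow_Suc2[OF a, of k] by simp
  finally show ?case .
qed

lemma (in group) conj_pow: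
  assumes "x \<in> carrier G" "h \<in> carrier G"
  shows "(x \<otimes> h \<otimes> inv x) [^] (n::nat) = x \<otimes> h [^] n \<otimes> inv x"
proof (induction n)
  case 0 then show ?case using assms by simp
next
  case (Suc n)
  have "(x \<otimes> h \<otimes> inv x) [^] Suc n = (x \<otimes> h [^] n \<otimes> inv x) \<otimes> (x \<otimes> h \<otimes> inv x)"
    using Suc by simp
  also have "\<dots> = x \<otimes> (h [^] n \<otimes> (inv x \<otimes> x) \<otimes> h) \<otimes> inv x"
    using assms by (simp add: m_assoc lc1 lc2)
  also have "\<dots> = x \<otimes> h [^] Suc n \<otimes> inv x"
    using assms by (simp add: m_assoc[symmetric] lc1 lc2)
  finally show ?case .
qed

lemma (in group) main:
  assumes "TR_star_group G"
  shows "Tor G \<lhd> G"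
proof -
  have TR: "\<And>g. gen_torsion_elem G g \<Longrightarrow> torsion_elem G g"
    using assms by (simp add: TR_star_group_def)
  have mult: "a \<otimes> b \<in> Tor G" if A: "a \<in> Tor G" and B: "b \<in> Tor G" for a b
  proof (cases "a \<otimes> b = \<one>")
    case True then show ?thesis by (auto simp: Tor_def torsion_elem_def intro: exI[of _ 1])
  next
    case False
    from A obtain m :: nat where m: "a \<in> carrier G" "m > 0" "a [^] m = \<one>"
      unfolding Tor_def torsion_elem_def by blast
    from B obtain n :: nat where n: "b \<in> carrier G" "n > 0" "b [^] n = \<one>"
      unfolding Tor_def torsion_elem_def by blast
    define L where "L = map (\<lambda>j. b [^] Suc j) (rev [0..<m])"
    define xs where "xs = concat (replicate n L)"
    have Lc: "set L \<subseteq> carrier G" using n by (auto simp: L_def)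
    have "length xs > 0" using m n by (simp add: xs_def L_def length_concat sum_list_replicate)
    moreover have "set xs \<subseteq> carrier G" using Lc by (auto simp: xs_def)
    moreover have "list_prod G (map (conj_elem G (a \<otimes> b)) xs) = \<one>"
    proof -
      have "map (conj_elem G (a \<otimes> b)) xs = concat (replicate n (map (conj_elem G (a \<otimes> b)) L))"
        by (simp add: xs_def map_concat)
      moreover have "set (map (conj_elem G (a \<otimes> b)) L) \<subseteq> carrier G"
        using Lc m n by (auto intro!: conj_closed)
      ultimately have "list_prod G (map (conj_elem G (a \<otimes> b)) xs) = (b [^] m \<otimes> a [^] m) [^] n"
        using list_prod_rep blk[OF m(1) n(1), of m] by (simp add: L_def)
      also have "\<dots> = (b [^] m) [^] n" using m n by simp
      also have "\<dots> = b [^] (m * n)" using nat_pow_pow[OF n(1), of m n] .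
      also have "\<dots> = b [^] (n * m)" by (simp add: mult.commute)
      also have "\<dots> = (b [^] n) [^] m" using nat_pow_pow[OF n(1), of n m] by simp
      finally show ?thesis using n by simp
    qed
    ultimately have "gen_torsion_elem G (a \<otimes> b)"
      using False m n by (auto simp: gen_torsion_elem_def)
    then show ?thesis using TR by (simp add: Tor_def)
  qed
  have sg: "subgroup (Tor G) G"
  proof (rule subgroupI)
    show "Tor G \<subseteq> carrier G" by (auto simp: Tor_def torsion_elem_def)
    show "Tor G \<noteq> {}" by (auto simp: Tor_def torsion_elem_def intro!: exI[of _ 1] exI[of _ \<one>])
    fix a assume "a \<in> Tor G"
    then obtain m :: nat where m: "a \<in> carrier G" "m > 0" "a [^] m = \<one>"
      unfolding Tor_def torsion_elem_def by blast
    then show "inv a \<in> Tor G" by (auto simp: Tor_def torsion_elem_def nat_pow_inv)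
  next
    fix a b assume "a \<in> Tor G" "b \<in> Tor G" then show "a \<otimes> b \<in> Tor G" by (rule mult)
  qed
  have "\<forall>x\<in>carrier G. \<forall>h\<in>Tor G. x \<otimes> h \<otimes> inv x \<in> Tor G"
  proof (intro ballI)
    fix x h assume x: "x \<in> carrier G" and "h \<in> Tor G"
    then obtain m :: nat where m: "h \<in> carrier G" "m > 0" "h [^] m = \<one>"
      unfolding Tor_def torsion_elem_def by blast
    then show "x \<otimes> h \<otimes> inv x \<in> Tor G"
      using x conj_pow[OF x m(1), of m] by (auto simp: Tor_def torsion_elem_def)
  qed
  then show ?thesis using sg normal_inv_iff by blast
qed

theorem corollary2p2:
  fixes G :: "('a, 'b) monoid_scheme"
  assumes "group G" and "TR_star_group G"
  shows "Tor G \<lhd> G"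
  using group.main[OF assms] .

end
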